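(* The diameter of the swap graph $\mathcal{G}_n$ is $\Omega\!\left(\frac{n}{\ln n}\right)$ as $n\to\infty$.
   Context: Sequences are finite sequences of pairwise distinct integers indexed from $1$. The Cartesian tree $C(x)$ of a sequence $x$ of length $n$ is empty if $n=0$; otherwise, if $x[i]$ is the minimum of $x$, it is the binary tree with root $i$, left subtree $C(x[1\ldots i-1])$ and right subtree $C(x[i+1\ldots n])$. $x\approx_{CT}y$ means $C(x)=C(y)$. For $1\le i\le n-1$, $\tau(x,i)$ is obtained from $x$ by exchanging $x[i]$ and $x[i+1]$. For sequences $x,y$ of length $n$, $x\overset{\tau}{\approx}_{CT}y$ means $x\approx_{CT}y$, or there is $i\in\{1,\ldots,n-1\}$ with $\tau(x,i)\approx_{CT}y$ or $\tau(y,i)\approx_{CT}x$. The swap graph $\mathcal{G}_n$ has as vertex set the set $\mathcal{C}_n$ of Cartesian trees with $n$ nodes (i.e. all binary trees with $n$ nodes), with an edge $\{C(x),C(y)\}$ whenever $x\overset{\tau}{\approx}_{CT}y$ (and $C(x)\neq C(y)$). *)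

theory Defs
  imports Complex_Main "HOL-Library.Tree" "HOL-Library.Extended_Real"
begin

definition minpos :: "int list \<Rightarrow> nat" where
  "minpos xs = (LEAST i. i < length xs \<and> xs ! i = Min (set xs))"

lemma minpos_less: "xs \<noteq> [] \<Longrightarrow> minpos xs < length xs"
proof -
  assume "xs \<noteq> []"
  then have "Min (set xs) \<in> set xs" by simp
  then obtain i where "i < length xs" "xs ! i = Min (set xs)" by (auto simp: in_set_conv_nth)
  then show ?thesis unfolding minpos_def by (metis (mono_tags, lifting) LeastI)
qed

(* Cartesian tree of a sequence; nodes are labelled by (1-based) positions,
   offset by k for subsequences.  C(x) = ctree 0 x. *)
function ctree :: "nat \<Rightarrow> int list \<Rightarrow> nat tree" where
  "ctree k xs = (if xs = [] then Leaf else
     Node (ctree k (take (minpos xs) xs)) (k + minpos xs + 1)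
          (ctree (k + minpos xs + 1) (drop (minpos xs + 1) xs)))"
  by pat_completeness auto
termination
  by (relation "measure (\<lambda>(k, xs). length xs)") (auto simp: min_def dest: minpos_less)

definition cart :: "int list \<Rightarrow> nat tree" where
  "cart xs = ctree 0 xs"

(* tau(x,i): exchange x[i] and x[i+1], with 1-based i *)
definition tau :: "int list \<Rightarrow> nat \<Rightarrow> int list" where
  "tau xs i = xs[i - 1 := xs ! i, i := xs ! (i - 1)]"

definition seqs :: "nat \<Rightarrow> int list set" where
  "seqs n = {xs. distinct xs \<and> length xs = n}"

definition tau_equiv :: "int list \<Rightarrow> int list \<Rightarrow> bool" where
  "tau_equiv x y \<longleftrightarrow> length x = length y \<and>
     (cart x = cart y \<or>
      (\<exists>i\<in>{1..length x - 1}. cart (tau x i) = cart y \<or> cart (tau y i) = cart x))"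

definition swap_vertices :: "nat \<Rightarrow> nat tree set" where
  "swap_vertices n = cart ` seqs n"

definition swap_edge :: "nat \<Rightarrow> nat tree \<Rightarrow> nat tree \<Rightarrow> bool" where
  "swap_edge n s t \<longleftrightarrow> s \<noteq> t \<and>
     (\<exists>x\<in>seqs n. \<exists>y\<in>seqs n. s = cart x \<and> t = cart y \<and> tau_equiv x y)"

definition swap_walk :: "nat \<Rightarrow> nat tree \<Rightarrow> nat tree \<Rightarrow> nat \<Rightarrow> bool" where
  "swap_walk n u v k \<longleftrightarrow> (\<exists>p. length p = k + 1 \<and> hd p = u \<and> last p = v \<and>
      set p \<subseteq> swap_vertices n \<and> (\<forall>j<k. swap_edge n (p ! j) (p ! (j + 1))))"

(* graph distance (\<infinity> if no path) *)
definition swap_dist :: "nat \<Rightarrow> nat tree \<Rightarrow> nat tree \<Rightarrow> enat" where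
  "swap_dist n u v = (INF k \<in> {k. swap_walk n u v k}. enat k)"

definition swap_diameter :: "nat \<Rightarrow> enat" where
  "swap_diameter n = (SUP uv \<in> swap_vertices n \<times> swap_vertices n. swap_dist n (fst uv) (snd uv))"

end

theory Submission
  imports Defs
begin
definition nsl :: "int list \<Rightarrow> nat \<Rightarrow> nat" where
  "nsl x j = (if \<exists>k<j. x!k < x!j then Suc (GREATEST k. k<j \<and> x!k < x!j) else 0)"

definition nslv :: "int list \<Rightarrow> nat list" where
  "nslv x = map (nsl x) [0..<length x]"

lemma nsl_eqI:
  assumes "k < j" "x!k < x!j" "\<And>k'. k < k' \<Longrightarrow> k' < j \<Longrightarrow> \<not> x!k' < x!j"
  shows "nsl x j = Suc k"
proof -
  have "(GREATEST k. k<j \<and> x!k < x!j) = k"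
    by (rule Greatest_equality) (use assms in \<open>auto simp: not_le[symmetric]\<close>)
  then show ?thesis using assms unfolding nsl_def by auto
qed

lemma nsl_0I: "(\<And>k. k < j \<Longrightarrow> \<not> x!k < x!j) \<Longrightarrow> nsl x j = 0"
  unfolding nsl_def by auto

lemma nsl_cases:
  "(nsl x j = 0 \<and> (\<forall>k<j. \<not> x!k < x!j)) \<or>
   (\<exists>k. nsl x j = Suc k \<and> k < j \<and> x!k < x!j \<and> (\<forall>k'. k < k' \<longrightarrow> k' < j \<longrightarrow> \<not> x!k' < x!j))"
proof (cases "\<exists>k<j. x!k < x!j")
  case True
  then obtain k0 where k0: "k0 < j \<and> x!k0 < x!j" by auto
  define g where "g = (GREATEST k. k<j \<and> x!k < x!j)"
  have g1: "g < j \<and> x!g < x!j" unfolding g_def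
    by (rule GreatestI_nat[of _ k0 j]) (use k0 in auto)
  have g2: "k' \<le> g" if "k' < j \<and> x!k' < x!j" for k' unfolding g_def
    by (rule Greatest_le_nat[of _ k' j]) (use that in auto)
  have "nsl x j = Suc g" using True unfolding nsl_def g_def by auto
  then show ?thesis using g1 g2 by (meson not_le)
next
  case False
  then show ?thesis unfolding nsl_def by auto
qed

lemma nsl_0D: "nsl x j = 0 \<Longrightarrow> k < j \<Longrightarrow> \<not> x!k < x!j"
  using nsl_cases[of x j] by auto

lemma nsl_SucD: "nsl x j = Suc k \<Longrightarrow> k < j \<and> x!k < x!j \<and> (\<forall>k'. k < k' \<longrightarrow> k' < j \<longrightarrow> \<not> x!k' < x!j)"
  using nsl_cases[of x j] by auto

lemma nsl_le: "nsl x j \<le> j"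
  using nsl_cases[of x j] by auto

lemma nsl_cong: "(\<And>k. k \<le> j \<Longrightarrow> x!k = y!k) \<Longrightarrow> nsl x j = nsl y j"
proof -
  assume h: "\<And>k. k \<le> j \<Longrightarrow> x!k = y!k"
  have "(\<lambda>k. k<j \<and> x!k < x!j) = (\<lambda>k. k<j \<and> y!k < y!j)"
    using h by (auto intro!: ext)
  then show ?thesis unfolding nsl_def by simp
qed

lemma ctree_Nil[simp]: "ctree k [] = Leaf" by (simp add: ctree.simps)

lemma ctree_ne: "xs \<noteq> [] \<Longrightarrow> ctree k xs = Node (ctree k (take (minpos xs) xs)) (k + minpos xs + 1)
          (ctree (k + minpos xs + 1) (drop (minpos xs + 1) xs))"
  by (subst ctree.simps) simp

declare ctree.simps[simp del]

lemma minpos_min: assumes "xs \<noteq> []" "distinct xs" "j < length xs" "j \<noteq> minpos xs"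
  shows "xs ! minpos xs < xs ! j"
proof -
  have m: "minpos xs < length xs" using minpos_less assms by auto
  have "xs ! minpos xs = Min (set xs)"
  proof -
    have "Min (set xs) \<in> set xs" using assms by simp
    then obtain i where "i < length xs" "xs ! i = Min (set xs)" by (auto simp: in_set_conv_nth)
    then show ?thesis unfolding minpos_def by (metis (mono_tags, lifting) LeastI)
  qed
  moreover have "Min (set xs) \<le> xs ! j" using assms by auto
  moreover have "xs ! minpos xs \<noteq> xs ! j" using assms m by (simp add: nth_eq_iff_index_eq)
  ultimately show ?thesis by auto
qed

lemma nsl_minpos: "xs \<noteq> [] \<Longrightarrow> distinct xs \<Longrightarrow> nsl xs (minpos xs) = 0"
proof (rule nsl_0I)
  fix k assume "xs \<noteq> []" "distinct xs" "k < minpos xs"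
  moreover then have "k < length xs" using minpos_less[of xs] by auto
  ultimately show "\<not> xs ! k < xs ! minpos xs" using minpos_min[of xs k] by auto
qed

lemma nsl_after_minpos: "xs \<noteq> [] \<Longrightarrow> distinct xs \<Longrightarrow> minpos xs < j \<Longrightarrow> j < length xs \<Longrightarrow> nsl xs j \<noteq> 0"
  using nsl_0D minpos_min by fastforce

lemma nsl_take: "j < m \<Longrightarrow> nsl (take m xs) j = nsl xs j"
  by (rule nsl_cong) simp

lemma nsl_drop:
  assumes "xs \<noteq> []" "distinct xs" "minpos xs < j" "j < length xs"
  shows "nsl xs j = (let v = nsl (drop (Suc (minpos xs)) xs) (j - Suc (minpos xs)) in
                      if v = 0 then Suc (minpos xs) else v + Suc (minpos xs))"
proof -
  let ?m = "minpos xs"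
  let ?d = "drop (Suc ?m) xs"
  let ?j = "j - Suc ?m"
  have dn: "?d ! k = xs ! (Suc ?m + k)" for k using assms minpos_less[of xs] by (simp add: nth_drop)
  have jj: "Suc ?m + ?j = j" using assms by auto
  show ?thesis
  proof (cases "nsl ?d ?j")
    case 0
    have "nsl xs j = Suc ?m"
    proof (rule nsl_eqI)
      show "?m < j" by fact
      show "xs ! ?m < xs ! j" using minpos_min assms by auto
      fix k' assume "?m < k'" "k' < j"
      then have "k' - Suc ?m < ?j" by auto
      from nsl_0D[OF 0 this] show "\<not> xs ! k' < xs ! j" using dn jj \<open>?m < k'\<close>
        by (metis Suc_leI le_add_diff_inverse)
    qed
    then show ?thesis using 0 by simp
  next
    case (Suc q)
    note D = nsl_SucD[OF Suc]
    have "nsl xs j = Suc (Suc ?m + q)"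
    proof (rule nsl_eqI)
      show "Suc ?m + q < j" using D jj by linarith
      show "xs ! (Suc ?m + q) < xs ! j" using D dn jj by metis
      fix k' assume "Suc ?m + q < k'" "k' < j"
      then have "q < k' - Suc ?m" "k' - Suc ?m < ?j" by auto
      with D have "\<not> ?d ! (k' - Suc ?m) < ?d ! ?j" by auto
      then show "\<not> xs ! k' < xs ! j" using dn jj \<open>Suc ?m + q < k'\<close>
        by (metis add_Suc_right add_diff_inverse_nat add_lessD1 not_less_eq)
    qed
    then show ?thesis using Suc by simp
  qed
qed


lemma ctree_Leaf_iff: "ctree k xs = Leaf \<longleftrightarrow> xs = []"
  by (cases "xs = []") (auto simp: ctree_ne)

lemma nsl_drop': 
  assumes "xs \<noteq> []" "distinct xs" "j' < length xs - Suc (minpos xs)"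
  shows "nsl xs (Suc (minpos xs) + j') = (let v = nsl (drop (Suc (minpos xs)) xs) j' in
                      if v = 0 then Suc (minpos xs) else v + Suc (minpos xs))"
  using nsl_drop[of xs "Suc (minpos xs) + j'"] assms by auto

lemma nslv_eq_ctree:
  "distinct x \<Longrightarrow> distinct y \<Longrightarrow> nslv x = nslv y \<Longrightarrow> ctree k x = ctree k y"
proof (induction "length x" arbitrary: x y k rule: less_induct)
  case less
  have len: "length x = length y" using less.prems(3) unfolding nslv_def
    by (metis length_map diff_zero length_upt)
  have nx: "\<And>j. j < length x \<Longrightarrow> nsl x j = nsl y j"
    using less.prems(3) len unfolding nslv_def
    by (metis (no_types, lifting) add_0 diff_zero nth_map nth_upt length_upt)
  show ?case
  proof (cases "x = []")
    case True then show ?thesis using len by simp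
  next
    case False
    then have ny: "y \<noteq> []" using len by auto
    let ?m = "minpos x"
    have mx: "?m < length x" using False minpos_less by auto
    have my: "minpos y < length y" using ny minpos_less by auto
    have meq: "minpos y = ?m"
    proof (rule ccontr)
      assume "minpos y \<noteq> ?m"
      then consider "minpos y < ?m" | "?m < minpos y" by linarith
      then show False
      proof cases
        case 1
        then show False using nsl_after_minpos[OF ny less.prems(2) 1] nsl_minpos[OF False less.prems(1)]
          nx mx len by auto
      next
        case 2
        then show False using nsl_after_minpos[OF False less.prems(1) 2] nsl_minpos[OF ny less.prems(2)]
          nx my len by auto
      qed
    qed
    have t: "ctree k (take ?m x) = ctree k (take ?m y)"
    proof (rule less.hyps)
      show "length (take ?m x) < length x" using mx by simp
      show "distinct (take ?m x)" "distinct (take ?m y)" using less.prems by auto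
      show "nslv (take ?m x) = nslv (take ?m y)" unfolding nslv_def
        using nx mx len by (auto simp: nsl_take min_def)
    qed
    have d: "ctree k' (drop (Suc ?m) x) = ctree k' (drop (Suc ?m) y)" for k'
    proof (rule less.hyps)
      show "length (drop (Suc ?m) x) < length x" using mx by simp
      show "distinct (drop (Suc ?m) x)" "distinct (drop (Suc ?m) y)" using less.prems by auto
      have H: "nsl (drop (Suc ?m) x) j' = nsl (drop (Suc ?m) y) j'" if j': "j' < length x - Suc ?m" for j'
      proof -
        have "nsl x (Suc ?m + j') = nsl y (Suc ?m + j')" using nx j' by auto
        then have "(let v = nsl (drop (Suc ?m) x) j' in if v = 0 then Suc ?m else v + Suc ?m)
            = (let v = nsl (drop (Suc ?m) y) j' in if v = 0 then Suc ?m else v + Suc ?m)"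
          using nsl_drop'[OF False less.prems(1) j'] nsl_drop'[OF ny less.prems(2), unfolded meq, of j'] j' len by auto
        then show "nsl (drop (Suc ?m) x) j' = nsl (drop (Suc ?m) y) j'"
          by (auto simp: Let_def split: if_splits)
      qed
      show "nslv (drop (Suc ?m) x) = nslv (drop (Suc ?m) y)" unfolding nslv_def
        using H len by simp
    qed
    show ?thesis using ctree_ne[OF False, of k] ctree_ne[OF ny, of k] meq t d by simp
  qed
qed

lemma ctree_eq_nslv:
  "distinct x \<Longrightarrow> distinct y \<Longrightarrow> ctree k x = ctree k y \<Longrightarrow> nslv x = nslv y"
proof (induction "length x" arbitrary: x y k rule: less_induct)
  case less
  show ?case
  proof (cases "x = []")
    case True then show ?thesis using less.prems(3) ctree_Leaf_iff[of k y] by simp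
  next
    case False
    then have ny: "y \<noteq> []" using less.prems(3) by (metis ctree_Leaf_iff)
    let ?m = "minpos x"
    have mx: "?m < length x" using False minpos_less by auto
    have my: "minpos y < length y" using ny minpos_less by auto
    note E = less.prems(3)[unfolded ctree_ne[OF False] ctree_ne[OF ny]]
    have meq: "minpos y = ?m" using E by simp
    have t: "nslv (take ?m x) = nslv (take ?m y)"
      by (rule less.hyps[of "take ?m x" _ k]) (use mx less.prems E meq in auto)
    have d: "nslv (drop (Suc ?m) x) = nslv (drop (Suc ?m) y)"
      by (rule less.hyps[of "drop (Suc ?m) x" _ "k + ?m + 1"]) (use mx less.prems E meq in auto)
    have ld: "length (drop (Suc ?m) x) = length (drop (Suc ?m) y)" using d unfolding nslv_def
      by (metis length_map diff_zero length_upt)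
    then have len: "length x = length y" using mx my meq by auto
    have nt: "nsl (take ?m x) j = nsl (take ?m y) j" if "j < ?m" for j
      using t that mx my meq unfolding nslv_def
      by (metis (no_types, lifting) add_0 diff_zero nth_map nth_upt length_upt length_take min_absorb2 less_imp_le_nat)
    have nd: "nsl (drop (Suc ?m) x) j = nsl (drop (Suc ?m) y) j" if "j < length x - Suc ?m" for j
      using d that ld unfolding nslv_def
      by (metis (no_types, lifting) add_0 diff_zero nth_map nth_upt length_upt length_drop)
    have "nsl x j = nsl y j" if j: "j < length x" for j
    proof -
      consider "j < ?m" | "j = ?m" | "?m < j" by linarith
      then show ?thesis
      proof cases
        case 1 then show ?thesis using nt[OF 1] nsl_take[OF 1] by metis
      next
        case 2 then show ?thesis using nsl_minpos[OF False less.prems(1)] nsl_minpos[OF ny less.prems(2)] meq by simp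
      next
        case 3
        then obtain j' where jj: "j = Suc ?m + j'" using less_imp_Suc_add by blast
        then have j': "j' < length x - Suc ?m" using j by auto
        show ?thesis using nsl_drop'[OF False less.prems(1) j'] nsl_drop'[OF ny less.prems(2)] nd[OF j'] j' jj len meq
          by (simp add: Let_def)
      qed
    qed
    then show ?thesis unfolding nslv_def using len by simp
  qed
qed


definition swapF :: "nat list \<Rightarrow> nat \<Rightarrow> nat \<Rightarrow> nat \<Rightarrow> nat \<Rightarrow> nat list" where
  "swapF l p A B T = map (\<lambda>j. if j < p then l!j else if j = p then A else if j = Suc p then B else
    (if l!j = Suc p then Suc (Suc p) else if l!j = Suc (Suc p) then (if j < T then Suc (Suc p) else Suc p)
     else l!j)) [0..<length l]"

lemma length_tau[simp]: "length (tau x i) = length x"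
  by (simp add: tau_def)

lemma tau_nth: "Suc p < length x \<Longrightarrow> k < length x \<Longrightarrow>
  tau x (Suc p) ! k = x ! (if k = p then Suc p else if k = Suc p then p else k)"
  by (auto simp: tau_def nth_list_update)

lemma nsl_tau:
  assumes dx: "distinct x" and p: "Suc p < j" and j: "j < length x"
    and hT0: "nsl x j = Suc (Suc p) \<Longrightarrow> (x!p < x!j \<longleftrightarrow> j < T)"
  shows "nsl (tau x (Suc p)) j = (if nsl x j = Suc p then Suc (Suc p) else if nsl x j = Suc (Suc p)
     then (if j < T then Suc (Suc p) else Suc p) else nsl x j)"
proof -
  let ?y = "tau x (Suc p)"
  have sp: "Suc p < length x" using p j by auto
  have yj: "?y ! j = x ! j" using tau_nth[OF sp j] p by auto
  have yk: "?y ! k = x ! (if k = p then Suc p else if k = Suc p then p else k)" if "k < j" for k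
    using tau_nth[OF sp, of k] that j by auto
  consider (z) "nsl x j = 0" "\<forall>k<j. \<not> x!k < x!j"
    | (s) q where "nsl x j = Suc q" "q < j" "x!q < x!j" "\<forall>k'. q < k' \<longrightarrow> k' < j \<longrightarrow> \<not> x!k' < x!j"
    using nsl_cases[of x j] by auto
  then show ?thesis
  proof cases
    case z
    have "nsl ?y j = 0"
    proof (rule nsl_0I)
      fix k assume "k < j"
      then show "\<not> ?y ! k < ?y ! j" using yk[of k] yj z p by (auto split: if_splits)
    qed
    then show ?thesis using z by simp
  next
    case s
    consider "Suc p < q" | "q < p" | "q = p" | "q = Suc p" by linarith
    then show ?thesis
    proof cases
      case 1
      have "nsl ?y j = Suc q"
        by (rule nsl_eqI) (use s 1 yk yj in auto)
      then show ?thesis using s 1 by simp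
    next
      case 2
      have "nsl ?y j = Suc q"
      proof (rule nsl_eqI)
        show "q < j" "?y ! q < ?y ! j" using s 2 yk yj by auto
        fix k' assume "q < k'" "k' < j"
        then show "\<not> ?y ! k' < ?y ! j" using s 2 yk[of k'] yj p by (auto split: if_splits)
      qed
      then show ?thesis using s 2 by simp
    next
      case 3
      have "nsl ?y j = Suc (Suc p)"
      proof (rule nsl_eqI)
        show "Suc p < j" "?y ! Suc p < ?y ! j" using s 3 yk yj p by auto
        fix k' assume "Suc p < k'" "k' < j"
        then show "\<not> ?y ! k' < ?y ! j" using s 3 yk[of k'] yj p by (auto split: if_splits)
      qed
      then show ?thesis using s 3 by simp
    next
      case 4
      have hT: "x!p < x!j \<longleftrightarrow> j < T" using hT0 s 4 by simp
      show ?thesis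
      proof (cases "x!p < x!j")
        case True
        have "nsl ?y j = Suc (Suc p)"
        proof (rule nsl_eqI)
          show "Suc p < j" "?y ! Suc p < ?y ! j" using True yk yj p by auto
          fix k' assume "Suc p < k'" "k' < j"
          then show "\<not> ?y ! k' < ?y ! j" using s 4 yk[of k'] yj p by (auto split: if_splits)
        qed
        then show ?thesis using s 4 True hT by simp
      next
        case False
        have "nsl ?y j = Suc p"
        proof (rule nsl_eqI)
          show "p < j" "?y ! p < ?y ! j" using s 4 yk yj p by auto
          fix k' assume "p < k'" "k' < j"
          then show "\<not> ?y ! k' < ?y ! j" using s 4 False yk[of k'] yj p by (auto split: if_splits)
        qed
        then show ?thesis using s 4 False hT by simp
      qed
    qed
  qed
qed

lemma threshold:
  assumes dx: "distinct x"
  shows "\<exists>T \<le> length x. \<forall>j. Suc p < j \<longrightarrow> j < length x \<longrightarrow> nsl x j = Suc (Suc p) \<longrightarrow>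
           (x!p < x!j \<longleftrightarrow> j < T)"
proof -
  define P where "P j \<longleftrightarrow> Suc p < j \<and> j < length x \<and> nsl x j = Suc (Suc p) \<and> \<not> x!p < x!j" for j
  define T where "T = (if \<exists>j. P j then LEAST j. P j else length x)"
  have Tle: "T \<le> length x"
  proof (cases "\<exists>j. P j")
    case True
    then have "P (Least P)" by (rule LeastI_ex)
    then show ?thesis using True unfolding T_def P_def by simp
  qed (simp add: T_def)
  have "x!p < x!j \<longleftrightarrow> j < T" if j: "Suc p < j" "j < length x" "nsl x j = Suc (Suc p)" for j
  proof
    assume lt: "x!p < x!j"
    show "j < T"
    proof (cases "\<exists>j. P j")
      case True
      then have PT: "P T" unfolding T_def by (auto intro: LeastI_ex)
      show ?thesis
      proof (rule ccontr)
        assume "\<not> j < T"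
        then consider "T = j" | "T < j" by linarith
        then show False
        proof cases
          case 1 then show False using PT lt P_def by auto
        next
          case 2
          have "\<not> x!T < x!j" using nsl_SucD[OF j(3)] 2 PT P_def by auto
          moreover have "x!T \<noteq> x!j" using 2 j dx PT P_def by (simp add: nth_eq_iff_index_eq)
          moreover have "\<not> x!p < x!T" using PT P_def by auto
          ultimately show False using lt by auto
        qed
      qed
    next
      case False
      then show ?thesis using j T_def by auto
    qed
  next
    assume "j < T"
    show "x!p < x!j"
    proof (rule ccontr)
      assume "\<not> x!p < x!j"
      then have "P j" using j P_def by auto
      then have "T \<le> j" unfolding T_def by (auto intro: Least_le)
      then show False using \<open>j < T\<close> by auto
    qed
  qed
  then show ?thesis using Tle by blast
qed

lemma nslv_tau:
  assumes dx: "distinct x" and sp: "Suc p < length x"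
  shows "\<exists>A B T. A \<le> length x \<and> B \<le> length x \<and> T \<le> length x \<and>
     nslv (tau x (Suc p)) = swapF (nslv x) p A B T"
proof -
  obtain T where T: "T \<le> length x" and hT: "\<forall>j. Suc p < j \<longrightarrow> j < length x \<longrightarrow> nsl x j = Suc (Suc p) \<longrightarrow>
           (x!p < x!j \<longleftrightarrow> j < T)" using threshold[OF dx] by blast
  let ?y = "tau x (Suc p)"
  let ?A = "nsl ?y p" and ?B = "nsl ?y (Suc p)"
  have "?A \<le> length x" "?B \<le> length x" using nsl_le[of ?y p] nsl_le[of ?y "Suc p"] sp by auto
  moreover have "nslv ?y = swapF (nslv x) p ?A ?B T"
    unfolding nslv_def swapF_def
  proof (rule nth_equalityI)
    show "length (map (nsl ?y) [0..<length ?y]) = length (map (\<lambda>j. if j < p then map (nsl x) [0..<length x] ! j else if j = p then ?A else if j = Suc p then ?B else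
    (if map (nsl x) [0..<length x] ! j = Suc p then Suc (Suc p) else if map (nsl x) [0..<length x] ! j = Suc (Suc p) then (if j < T then Suc (Suc p) else Suc p)
     else map (nsl x) [0..<length x] ! j)) [0..<length (map (nsl x) [0..<length x])])" by simp
    fix j assume "j < length (map (nsl ?y) [0..<length ?y])"
    then have j: "j < length x" by simp
    consider "j < p" | "j = p" | "j = Suc p" | "Suc p < j" by linarith
    then show "map (nsl ?y) [0..<length ?y] ! j = map (\<lambda>j. if j < p then map (nsl x) [0..<length x] ! j else if j = p then ?A else if j = Suc p then ?B else
    (if map (nsl x) [0..<length x] ! j = Suc p then Suc (Suc p) else if map (nsl x) [0..<length x] ! j = Suc (Suc p) then (if j < T then Suc (Suc p) else Suc p)
     else map (nsl x) [0..<length x] ! j)) [0..<length (map (nsl x) [0..<length x])] ! j"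
    proof cases
      case 1
      have "nsl ?y j = nsl x j" by (rule nsl_cong) (use 1 j sp tau_nth[OF sp] in auto)
      then show ?thesis using 1 j by simp
    next
      case 2 then show ?thesis using j by simp
    next
      case 3 then show ?thesis using j by simp
    next
      case 4
      have "x!p < x!j \<longleftrightarrow> j < T" if "nsl x j = Suc (Suc p)" using hT 4 j that by auto
      then show ?thesis using nsl_tau[OF dx 4 j, of T] 4 j by auto
    qed
  qed
  ultimately show ?thesis using T by blast
qed


lemma tau_distinct: assumes "distinct x" "Suc p < length x" shows "distinct (tau x (Suc p))"
proof -
  have "tau x (Suc p) ! a \<noteq> tau x (Suc p) ! b" if "a < length x" "b < length x" "a \<noteq> b" for a b
    using that assms tau_nth[OF assms(2), of a] tau_nth[OF assms(2), of b]
    by (auto simp: nth_eq_iff_index_eq split: if_splits)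
  then show ?thesis by (auto simp: distinct_conv_nth)
qed

lemma tau_tau: assumes "Suc p < length x" shows "tau (tau x (Suc p)) (Suc p) = x"
proof (rule nth_equalityI)
  fix k assume "k < length (tau (tau x (Suc p)) (Suc p))"
  then have k: "k < length x" by simp
  show "tau (tau x (Suc p)) (Suc p) ! k = x ! k"
    using tau_nth[of p "tau x (Suc p)" k] tau_nth[OF assms] assms k by auto
qed simp

lemma tau_seqs: "x \<in> seqs n \<Longrightarrow> Suc p < n \<Longrightarrow> tau x (Suc p) \<in> seqs n"
  unfolding seqs_def using tau_distinct by auto

lemma edge_tau:
  assumes "swap_edge n s t"
  shows "\<exists>z\<in>seqs n. \<exists>p. Suc p < n \<and> cart z = s \<and> t = cart (tau z (Suc p))"
proof -
  obtain x y where xy: "x \<in> seqs n" "y \<in> seqs n" "s = cart x" "t = cart y" "tau_equiv x y" "s \<noteq> t"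
    using assms unfolding swap_edge_def by blast
  have lx: "length x = n" using xy(1) by (simp add: seqs_def)
  have ne: "cart x \<noteq> cart y" using xy(3,4,6) by simp
  obtain i where i: "i \<in> {1..n - 1}" "cart (tau x i) = cart y \<or> cart (tau y i) = cart x"
    using xy(5) ne lx unfolding tau_equiv_def by blast
  obtain p where p: "i = Suc p" "Suc p < n" using i(1) by (cases i) auto
  show ?thesis
  proof (cases "cart (tau x i) = cart y")
    case True
    have "Suc p < n \<and> cart x = s \<and> t = cart (tau x (Suc p))" using True xy(3,4) p(2) unfolding p(1) by simp
    with xy(1) show ?thesis by blast
  next
    case False
    then have e: "cart (tau y i) = cart x" using i by auto
    have ly: "length y = n" using xy(2) by (simp add: seqs_def)
    have tt: "tau (tau y (Suc p)) (Suc p) = y" using tau_tau[of p y] ly p(2) by simp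
    have "Suc p < n \<and> cart (tau y i) = s \<and> t = cart (tau (tau y i) (Suc p))"
      using e xy(3,4) p(2) tt unfolding p(1) by simp
    moreover have "tau y i \<in> seqs n" using tau_seqs[OF xy(2) p(2)] unfolding p(1) .
    ultimately show ?thesis by blast
  qed
qed

definition rep :: "nat \<Rightarrow> nat tree \<Rightarrow> int list" where
  "rep n s = (SOME x. x \<in> seqs n \<and> cart x = s)"

definition psi :: "nat \<Rightarrow> nat list \<Rightarrow> nat tree" where
  "psi n l = cart (SOME w. w \<in> seqs n \<and> nslv w = l)"

definition Nb :: "nat \<Rightarrow> nat tree \<Rightarrow> nat tree set" where
  "Nb n s = (\<lambda>(p,A,B,T). psi n (swapF (nslv (rep n s)) p A B T)) ` ({..n} \<times> {..n} \<times> {..n} \<times> {..n})"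

lemma cart_nslv: "x \<in> seqs n \<Longrightarrow> y \<in> seqs m \<Longrightarrow> cart x = cart y \<longleftrightarrow> nslv x = nslv y"
  unfolding cart_def seqs_def using ctree_eq_nslv nslv_eq_ctree by blast

lemma rep: "x \<in> seqs n \<Longrightarrow> cart x = s \<Longrightarrow> rep n s \<in> seqs n \<and> cart (rep n s) = s"
  unfolding rep_def by (rule someI) blast

lemma psi: "w \<in> seqs n \<Longrightarrow> psi n (nslv w) = cart w"
proof -
  assume w: "w \<in> seqs n"
  let ?v = "SOME v. v \<in> seqs n \<and> nslv v = nslv w"
  have "?v \<in> seqs n \<and> nslv ?v = nslv w" by (rule someI) (use w in blast)
  then show ?thesis unfolding psi_def using cart_nslv w by blast
qed

lemma edge_Nb: "swap_edge n s t \<Longrightarrow> t \<in> Nb n s"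
proof -
  assume "swap_edge n s t"
  then obtain z p where z: "z \<in> seqs n" "Suc p < n" "cart z = s" "t = cart (tau z (Suc p))"
    using edge_tau by blast
  have lz: "length z = n" "distinct z" using z(1) by (auto simp: seqs_def)
  obtain A B T where ABT: "A \<le> n" "B \<le> n" "T \<le> n" "nslv (tau z (Suc p)) = swapF (nslv z) p A B T"
    using nslv_tau[OF lz(2)] z(2) lz(1) by blast
  have r: "nslv (rep n s) = nslv z" using rep[OF z(1,3)] cart_nslv z by blast
  have "t = psi n (swapF (nslv (rep n s)) p A B T)"
    using psi[OF tau_seqs[OF z(1,2)]] ABT(4) r z(4) by simp
  moreover have "(p,A,B,T) \<in> {..n}\<times>{..n}\<times>{..n}\<times>{..n}" using ABT z(2) by auto
  ultimately show ?thesis unfolding Nb_def by (intro image_eqI[of _ _ "(p,A,B,T)"]) simp_all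
qed

lemma card_Nb: "finite (Nb n s) \<and> card (Nb n s) \<le> (Suc n)^4"
proof -
  have "card ({..n} \<times> {..n} \<times> {..n} \<times> {..n}) = (Suc n)^4"
    by (simp add: card_cartesian_product eval_nat_numeral)
  moreover have "finite ({..n} \<times> {..n} \<times> {..n} \<times> {..n})" by simp
  ultimately show ?thesis unfolding Nb_def using card_image_le by (metis finite_imageI)
qed

primrec reach :: "nat \<Rightarrow> nat tree \<Rightarrow> nat \<Rightarrow> nat tree set" where
  "reach n u 0 = {u}"
| "reach n u (Suc k) = reach n u k \<union> (\<Union>s\<in>reach n u k. Nb n s)"

lemma reach_mono: "k \<le> k' \<Longrightarrow> reach n u k \<subseteq> reach n u k'"
  by (induction k' rule: dec_induct) auto

lemma reach_card: "finite (reach n u k) \<and> card (reach n u k) \<le> (Suc ((Suc n)^4))^k"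
proof (induction k)
  case 0 then show ?case by simp
next
  case (Suc k)
  define R where "R = reach n u k"
  define M where "M = (Suc n)^4"
  define U where "U = (\<Union>s\<in>R. Nb n s)"
  have fR: "finite R" and cR: "card R \<le> (Suc M)^k" using Suc unfolding R_def M_def by auto
  have fU: "finite U" unfolding U_def by (intro finite_UN_I fR) (simp add: card_Nb)
  have "card U \<le> (\<Sum>s\<in>R. card (Nb n s))" unfolding U_def by (rule card_UN_le[OF fR])
  also have "\<dots> \<le> (\<Sum>s\<in>R. M)" by (rule sum_mono) (simp add: card_Nb M_def)
  also have "\<dots> = card R * M" by simp
  finally have cU: "card U \<le> card R * M" .
  have "card (R \<union> U) \<le> card R + card U" by (rule card_Un_le)
  also have "\<dots> \<le> card R * Suc M" using cU by simp
  also have "\<dots> \<le> (Suc M)^k * Suc M" using cR by (rule mult_le_mono1)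
  finally have "card (R \<union> U) \<le> (Suc M)^(Suc k)" by (simp add: mult.commute)
  moreover have "reach n u (Suc k) = R \<union> U" unfolding R_def U_def by simp
  ultimately show ?case using fR fU unfolding M_def by simp
qed

lemma walk_reach: "swap_walk n u v k \<Longrightarrow> v \<in> reach n u k"
proof (induction k arbitrary: v)
  case 0
  then obtain p where p: "length p = 0 + 1" "hd p = u" "last p = v" unfolding swap_walk_def by blast
  have "hd p = last p" using p(1) by (cases p) auto
  then show ?case using p by simp
next
  case (Suc k)
  then obtain p where p: "length p = Suc k + 1" "hd p = u" "last p = v" "set p \<subseteq> swap_vertices n"
      "\<forall>j<Suc k. swap_edge n (p ! j) (p ! (j + 1))" unfolding swap_walk_def by blast
  let ?q = "take (Suc k) p"
  have "swap_walk n u (p ! k) k" unfolding swap_walk_def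
  proof (intro exI[of _ ?q] conjI)
    show "length ?q = k + 1" using p(1) by simp
    show "hd ?q = u" using p(1,2) by (cases p) auto
    show "last ?q = p ! k" using p(1) by (simp add: take_Suc_conv_app_nth)
    show "set ?q \<subseteq> swap_vertices n" using p(4) by (meson order_trans set_take_subset)
    show "\<forall>j<k. swap_edge n (?q ! j) (?q ! (j + 1))"
    proof (intro allI impI)
      fix j assume j: "j < k"
      then have "?q ! j = p ! j" "?q ! (j + 1) = p ! (j + 1)" by simp_all
      moreover have "swap_edge n (p ! j) (p ! (j + 1))" using p(5) j by simp
      ultimately show "swap_edge n (?q ! j) (?q ! (j + 1))" by simp
    qed
  qed
  then have "p ! k \<in> reach n u k" by (rule Suc.IH)
  moreover have "v = p ! Suc k"
  proof -
    have "p \<noteq> []" using p(1) by auto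
    then have "last p = p ! (length p - 1)" by (rule last_conv_nth)
    then show ?thesis using p(1,3) by simp
  qed
  moreover have "swap_edge n (p ! k) (p ! Suc k)" using p(5) by simp
  ultimately have "v \<in> Nb n (p ! k)" "p ! k \<in> reach n u k" using edge_Nb by blast+
  then show ?case by auto
qed

lemma asc_nsl: "0 < j \<Longrightarrow> nsl x j = j \<longleftrightarrow> x!(j-1) < x!j"
proof
  assume "0 < j" "nsl x j = j"
  then have "nsl x j = Suc (j - 1)" by simp
  then show "x!(j-1) < x!j" using nsl_SucD by blast
next
  assume j: "0 < j" "x!(j-1) < x!j"
  have "nsl x j = Suc (j - 1)" by (rule nsl_eqI) (use j in auto)
  then show "nsl x j = j" using j by simp
qed

definition zB :: "nat set \<Rightarrow> nat \<Rightarrow> int list" where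
  "zB B n = map (\<lambda>j. if j \<in> B then int j else - int j) [0..<n]"

lemma zB_seqs: "zB B n \<in> seqs n"
proof -
  have "inj_on (\<lambda>j. if j \<in> B then int j else - int j) (set [0..<n])"
    by (auto simp: inj_on_def split: if_splits)
  then show ?thesis unfolding seqs_def zB_def by (simp add: distinct_map)
qed

lemma zB_asc: assumes "0 < j" "j < n" shows "zB B n ! (j-1) < zB B n ! j \<longleftrightarrow> j \<in> B"
proof -
  have a: "zB B n ! (j-1) = (if j - 1 \<in> B then int (j-1) else - int (j-1))"
    using assms unfolding zB_def by simp
  have b: "zB B n ! j = (if j \<in> B then int j else - int j)"
    using assms unfolding zB_def by simp
  show ?thesis unfolding a b using assms by auto
qed

definition asc :: "nat \<Rightarrow> nat tree \<Rightarrow> nat set" where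
  "asc n s = {j \<in> {1..<n}. nslv (rep n s) ! j = j}"

lemma asc_zB: assumes "B \<subseteq> {1..<n}" shows "asc n (cart (zB B n)) = B"
proof -
  have r: "nslv (rep n (cart (zB B n))) = nslv (zB B n)"
    using rep[OF zB_seqs[of B n] refl] cart_nslv zB_seqs by blast
  have l: "length (zB B n) = n" by (simp add: zB_def)
  have "j \<in> {1..<n} \<Longrightarrow> nslv (zB B n) ! j = j \<longleftrightarrow> j \<in> B" for j
    using asc_nsl[of j "zB B n"] zB_asc[of j n B] l by (auto simp: nslv_def)
  then show ?thesis unfolding asc_def r using assms by auto
qed

lemma card_V_lower: assumes "finite (swap_vertices n)" shows "2^(n-1) \<le> card (swap_vertices n)"
proof -
  have "Pow {1..<n} \<subseteq> asc n ` swap_vertices n"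
  proof
    fix B assume "B \<in> Pow {1..<n}"
    then have "asc n (cart (zB B n)) = B" using asc_zB by auto
    moreover have "cart (zB B n) \<in> swap_vertices n" unfolding swap_vertices_def using zB_seqs by blast
    ultimately show "B \<in> asc n ` swap_vertices n" by (metis image_eqI)
  qed
  then have "card (Pow {1..<n}) \<le> card (asc n ` swap_vertices n)"
    using assms by (intro card_mono) auto
  also have "\<dots> \<le> card (swap_vertices n)" using assms by (rule card_image_le)
  finally show ?thesis by (simp add: card_Pow)
qed

lemma dist_walk: assumes "swap_dist n u v \<le> enat d" shows "\<exists>k\<le>d. swap_walk n u v k"
proof (rule ccontr)
  assume nt: "\<not> ?thesis"
  then have "\<forall>k\<in>{k. swap_walk n u v k}. enat (Suc d) \<le> enat k"
  proof (intro ballI)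
    fix k assume "k \<in> {k. swap_walk n u v k}"
    then have "\<not> k \<le> d" using nt by blast
    then show "enat (Suc d) \<le> enat k" by simp
  qed
  then have "enat (Suc d) \<le> swap_dist n u v" unfolding swap_dist_def by (intro INF_greatest) auto
  then have "enat (Suc d) \<le> enat d" using assms by (rule order_trans)
  then show False by simp
qed

lemma arith_bound:
  assumes n: "2 \<le> n" and h: "2^(n-1) \<le> (Suc ((Suc n)^4))^d"
  shows "1/80 * (real n / ln (real n)) \<le> real d"
proof -
  have "Suc ((Suc n)^4) \<le> (Suc n)^4 * Suc n" using n by simp
  also have "\<dots> = (Suc n)^5" by (simp add: eval_nat_numeral)
  also have "\<dots> \<le> (n^2)^5"
  proof (intro power_mono)
    have "2 * n \<le> n * n" using mult_le_mono1[OF n, of n] .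
    then show "Suc n \<le> n^2" using n unfolding power2_eq_square by linarith
  qed simp
  finally have "Suc ((Suc n)^4) \<le> n^10" by (simp add: power_mult[symmetric])
  then have "(Suc ((Suc n)^4))^d \<le> (n^10)^d" by (rule power_mono) simp
  with h have "2^(n-1) \<le> n^(10*d)" by (simp add: power_mult)
  then have "(2::real)^(n-1) \<le> real n^(10*d)" by (metis of_nat_le_iff of_nat_numeral of_nat_power)
  then have "ln ((2::real)^(n-1)) \<le> ln (real n^(10*d))" using n by (subst ln_le_cancel_iff) auto
  then have L: "real (n-1) * ln 2 \<le> real (10*d) * ln (real n)" using n by (simp add: ln_realpow)
  have "1/2 - (1/2)^2 \<le> ln (1 + 1/2::real)" by (rule ln_one_plus_pos_lower_bound) auto
  then have a: "1/4 \<le> ln (3/2::real)" by (simp add: power2_eq_square)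
  have "ln (3/2::real) \<le> ln 2" by simp
  with a have l2: "1/4 \<le> ln (2::real)" by linarith
  have lnpos: "0 < ln (real n)" using n by simp
  have "real n \<le> 8 * (real (n-1) * (1/4))" using n by (simp add: of_nat_diff)
  also have "\<dots> \<le> 8 * (real (n-1) * ln 2)" using l2 by (intro mult_left_mono) auto
  also have "\<dots> \<le> 8 * (real (10*d) * ln (real n))" using L by (simp add: algebra_simps)
  finally have "real n \<le> 80 * real d * ln (real n)" by simp
  then have "real n / ln (real n) \<le> 80 * real d" using lnpos by (simp add: divide_le_eq)
  then show ?thesis by simp
qed

theorem lemma11:
  "\<exists>c > 0. \<forall>\<^sub>F n in sequentially.
     ereal (c * (real n / ln (real n))) \<le> ereal_of_enat (swap_diameter n)"
proof (intro exI[of _ "1/80"] conjI)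
  show "(0::real) < 1/80" by simp
  show "\<forall>\<^sub>F n in sequentially. ereal (1/80 * (real n / ln (real n))) \<le> ereal_of_enat (swap_diameter n)"
    unfolding eventually_sequentially
  proof (intro exI[of _ 2] allI impI)
    fix n :: nat assume n: "2 \<le> n"
    show "ereal (1/80 * (real n / ln (real n))) \<le> ereal_of_enat (swap_diameter n)"
    proof (cases "swap_diameter n")
      case infinity then show ?thesis by simp
    next
      case (enat d)
      let ?V = "swap_vertices n"
      define u where "u = cart (map int [0..<n])"
      have uV: "u \<in> ?V" unfolding u_def swap_vertices_def seqs_def
        by (intro imageI) (simp add: distinct_map inj_on_def)
      have "?V \<subseteq> reach n u d"
      proof
        fix v assume vV: "v \<in> ?V"
        have "swap_dist n u v \<le> swap_diameter n" unfolding swap_diameter_def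
          using uV vV by (intro SUP_upper2[of "(u,v)"]) auto
        then have "swap_dist n u v \<le> enat d" using enat by simp
        then obtain k where "k \<le> d" "swap_walk n u v k" using dist_walk by blast
        then show "v \<in> reach n u d" using walk_reach reach_mono by blast
      qed
      note sub = this
      have R1: "finite (reach n u d)" and R2: "card (reach n u d) \<le> (Suc ((Suc n)^4))^d"
        using reach_card[of n u d] by auto
      have fV: "finite ?V" using finite_subset[OF sub R1] .
      have cV: "card ?V \<le> (Suc ((Suc n)^4))^d" using order_trans[OF card_mono[OF R1 sub] R2] .
      have "2^(n-1) \<le> (Suc ((Suc n)^4))^d" using card_V_lower[OF fV] cV by simp
      then have "1/80 * (real n / ln (real n)) \<le> real d" using arith_bound n by blast
      then show ?thesis using enat by simp
    qed
  qed
qed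

end
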